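(* Let $a^*\in A$ be a pure strategy profile of $G$. If for every $\bar p\in(0,1)$ there exists $p\in(\bar p,1)$ such that $a^*$ is stable for the degree of observability $p$, then $a^*$ is weakly Pareto efficient with respect to $\pi$.
   Context: Objective game: $G=(N,A,\pi)$ is a finite $n$-player normal-form game, $N=\{1,\dots,n\}$, finite action sets $A_i$, $A=\prod_iA_i$, fitness functions $\pi_i:A\to\mathbb{R}$ extended multilinearly to $\prod_i\Delta(A_i)$. $\sigma$ strongly Pareto dominates $\sigma'$ if $\pi_i(\sigma)>\pi_i(\sigma')$ for all $i$; $\sigma$ is weakly Pareto efficient if no profile in $\prod_i\Delta(A_i)$ strongly Pareto dominates it. Preference types: $\Theta=\mathbb{R}^A$ (extended multilinearly). $\mathcal{M}(\Theta^n)$: product distributions $\mu=\mu_1\times\dots\times\mu_n$ with finitely supported marginals; $\operatorname{supp}\mu=\prod_i\operatorname{supp}\mu_i$, $\mu(\theta)=\prod_i\mu_i(\theta_i)$, $\mu_{-i}(\theta_{-i})=\prod_{j\ne i}\mu_j(\theta_j)$. Mutants: for nonempty $J\subseteq N$, $\tilde\theta_J\in\prod_{j\in J}(\Theta\setminus\operatorname{supp}\mu_j)$ with shares $\varepsilon\in(0,1)^{|J|}$, $\|\varepsilon\|=\max_j\varepsilon_j$; post-entry $\tilde\mu^\varepsilon_i=(1-\varepsilon_i)\mu_i+\varepsilon_i\delta_{\tilde\theta_i}$ for $i\in J$, $\mu_i$ otherwise. Partial observability with degree $p\in(0,1)$: each player independently observes opponents' types with probability $p$ and otherwise knows only $\mu_{-i}$.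 Strategies: $b:\operatorname{supp}\mu\to\prod_i\Delta(A_i)$ (play when observing) and $s_i:\operatorname{supp}\mu_i\to\Delta(A_i)$ (play when not observing), $s(\theta)=(s_i(\theta_i))_i$. For a matched profile $\theta$ and the set $T\subseteq N$ of non-observing players, the profile played is $(s(\theta)_T,b(\theta)_{-T})$. $(b,s)$ is an equilibrium if for all $\theta\in\operatorname{supp}\mu$ and $i$: $b_i(\theta)\in\arg\max_{\sigma_i}\sum_{T\subseteq N\setminus\{i\}}p^{n-1-|T|}(1-p)^{|T|}\theta_i(\sigma_i,(s_{-i}(\theta_{-i})_T,b_{-i}(\theta)_{-T}))$ and $s_i(\theta_i)\in\arg\max_{\sigma_i}\sum_{\theta'_{-i}}\mu_{-i}(\theta'_{-i})\sum_{T\subseteq N\setminus\{i\}}p^{n-1-|T|}(1-p)^{|T|}\theta_i(\sigma_i,(s_{-i}(\theta'_{-i})_T,b_{-i}(\theta_i,\theta'_{-i})_{-T}))$; $B_p(\mu)$ is the set of these; $(\mu,b,s)$ is a configuration. Aggregate outcome: $\varphi_{\mu,b,s}(a)=\sum_{\theta}\mu(\theta)\sum_{T\subseteq N}p^{n-|T|}(1-p)^{|T|}\prod_i(s(\theta)_T,b(\theta)_{-T})_i(a_i)$. Average fitness: $\Pi_{\theta_i}(\mu;b,s)=\sum_{\theta'_{-i}}\mu_{-i}(\theta'_{-i})\sum_{T\subseteq N}p^{n-|T|}(1-p)^{|T|}\pi_i(s(\theta_i,\theta'_{-i})_T,b(\theta_i,\theta'_{-i})_{-T})$. Balanced: equal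 average fitness of all types within each population. Nearby set: $B_p^\eta(\tilde\mu^\varepsilon;b,s)=\{(\tilde b,\tilde s)\in B_p(\tilde\mu^\varepsilon):\max_i\|\tilde b_i(\theta)-b_i(\theta)\|\le\eta,\ \max_i\|\tilde s_i(\theta_i)-s_i(\theta_i)\|\le\eta\ \forall\theta\in\operatorname{supp}\mu\}$. $(\mu,b,s)$ is stable (for degree $p$) if balanced and for every nonempty $J$, every $\tilde\theta_J$, every $\eta>0$, there are $\bar\eta\in[0,\eta)$, $\bar\epsilon\in(0,1)$ such that for all $\varepsilon$ with $\|\varepsilon\|\in(0,\bar\epsilon)$, $B_p^{\bar\eta}(\tilde\mu^\varepsilon;b,s)\ne\emptyset$ and each of its elements satisfies (i) some $j\in J$ has $\Pi_{\theta_j}>\Pi_{\tilde\theta_j}$ (post-entry) for all $\theta_j\in\operatorname{supp}\mu_j$, or (ii) for every $i$ all types in $\operatorname{supp}\tilde\mu^\varepsilon_i$ have equal post-entry average fitness. A pure profile $a^*$ is stable for degree $p$ if the point mass at $a^*$ is the aggregate outcome of a stable configuration for $p$. *)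

theory Defs
  imports Complex_Main "HOL-Library.FuncSet"
begin

text \<open>Players are 0,...,n-1 (the paper's 1,...,n).\<close>

type_synonym 'a prof = "nat \<Rightarrow> 'a"
type_synonym 'a ptype = "'a prof \<Rightarrow> real"
type_synonym 'a mixed = "'a \<Rightarrow> real"
type_synonym 'a mprof = "nat \<Rightarrow> 'a mixed"
type_synonym 'a tprof = "nat \<Rightarrow> 'a ptype"
type_synonym 'a dist = "'a ptype \<Rightarrow> real"

definition PureProfs :: "nat \<Rightarrow> (nat \<Rightarrow> 'a set) \<Rightarrow> 'a prof set" where
  "PureProfs n A = PiE {..<n} A"

definition Delta :: "'a set \<Rightarrow> 'a mixed set" where
  "Delta S = {\<sigma>. (\<forall>x. 0 \<le> \<sigma> x) \<and> (\<forall>x. x \<notin> S \<longrightarrow> \<sigma> x = 0) \<and> sum \<sigma> S = 1}"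

definition MixedProfs :: "nat \<Rightarrow> (nat \<Rightarrow> 'a set) \<Rightarrow> 'a mprof set" where
  "MixedProfs n A = {\<sigma>. \<forall>i<n. \<sigma> i \<in> Delta (A i)}"

definition mlext :: "nat \<Rightarrow> (nat \<Rightarrow> 'a set) \<Rightarrow> ('a prof \<Rightarrow> real) \<Rightarrow> 'a mprof \<Rightarrow> real" where
  "mlext n A u \<sigma> = (\<Sum>a\<in>PureProfs n A. (\<Prod>i<n. \<sigma> i (a i)) * u a)"

definition pure_mixed :: "'a prof \<Rightarrow> 'a mprof" where
  "pure_mixed a = (\<lambda>i x. if x = a i then 1 else 0)"

definition strongly_pareto_dominates ::
  "nat \<Rightarrow> (nat \<Rightarrow> 'a set) \<Rightarrow> (nat \<Rightarrow> 'a prof \<Rightarrow> real) \<Rightarrow> 'a mprof \<Rightarrow> 'a mprof \<Rightarrow> bool" where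
  "strongly_pareto_dominates n A \<pi> \<sigma> \<sigma>' = (\<forall>i<n. mlext n A (\<pi> i) \<sigma> > mlext n A (\<pi> i) \<sigma>')"

definition weakly_pareto_efficient ::
  "nat \<Rightarrow> (nat \<Rightarrow> 'a set) \<Rightarrow> (nat \<Rightarrow> 'a prof \<Rightarrow> real) \<Rightarrow> 'a mprof \<Rightarrow> bool" where
  "weakly_pareto_efficient n A \<pi> \<sigma> =
     (\<not> (\<exists>\<sigma>'\<in>MixedProfs n A. strongly_pareto_dominates n A \<pi> \<sigma>' \<sigma>))"

text \<open>Preference types: real functions on the pure profiles A (represented as
functions vanishing outside A, so that Theta corresponds exactly to R^A).\<close>
definition Theta :: "nat \<Rightarrow> (nat \<Rightarrow> 'a set) \<Rightarrow> 'a ptype set" where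
  "Theta n A = {\<theta>. \<forall>a. a \<notin> PureProfs n A \<longrightarrow> \<theta> a = 0}"

definition dsupp :: "('b \<Rightarrow> real) \<Rightarrow> 'b set" where
  "dsupp m = {x. m x \<noteq> 0}"

definition fsdist :: "('b \<Rightarrow> real) \<Rightarrow> 'b set \<Rightarrow> bool" where
  "fsdist m S = ((\<forall>x. 0 \<le> m x) \<and> finite (dsupp m) \<and> dsupp m \<subseteq> S \<and> sum m (dsupp m) = 1)"

text \<open>A product distribution is given by its marginals mu i.\<close>
definition ProdDist :: "nat \<Rightarrow> (nat \<Rightarrow> 'a set) \<Rightarrow> (nat \<Rightarrow> 'a dist) \<Rightarrow> bool" where
  "ProdDist n A \<mu> = (\<forall>i<n. fsdist (\<mu> i) (Theta n A))"

definition TP :: "nat \<Rightarrow> (nat \<Rightarrow> 'a dist) \<Rightarrow> 'a tprof set" where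
  "TP n \<mu> = PiE {..<n} (\<lambda>i. dsupp (\<mu> i))"

definition TPi :: "nat \<Rightarrow> (nat \<Rightarrow> 'a dist) \<Rightarrow> nat \<Rightarrow> 'a ptype \<Rightarrow> 'a tprof set" where
  "TPi n \<mu> i t = PiE {..<n} (\<lambda>j. if j = i then {t} else dsupp (\<mu> j))"

definition muminus :: "nat \<Rightarrow> (nat \<Rightarrow> 'a dist) \<Rightarrow> nat \<Rightarrow> 'a tprof \<Rightarrow> real" where
  "muminus n \<mu> i \<theta> = (\<Prod>j\<in>{..<n} - {i}. \<mu> j (\<theta> j))"

definition mix :: "nat set \<Rightarrow> 'a mprof \<Rightarrow> 'a mprof \<Rightarrow> 'a mprof" where
  "mix T \<sigma> \<tau> = (\<lambda>i. if i \<in> T then \<sigma> i else \<tau> i)"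

definition sprof :: "(nat \<Rightarrow> 'a ptype \<Rightarrow> 'a mixed) \<Rightarrow> 'a tprof \<Rightarrow> 'a mprof" where
  "sprof s \<theta> = (\<lambda>i. s i (\<theta> i))"

definition pay_obs ::
  "nat \<Rightarrow> (nat \<Rightarrow> 'a set) \<Rightarrow> real \<Rightarrow> ('a tprof \<Rightarrow> 'a mprof) \<Rightarrow> (nat \<Rightarrow> 'a ptype \<Rightarrow> 'a mixed)
   \<Rightarrow> 'a tprof \<Rightarrow> nat \<Rightarrow> ('a prof \<Rightarrow> real) \<Rightarrow> 'a mixed \<Rightarrow> real" where
  "pay_obs n A p b s \<theta> i u \<sigma>i =
     (\<Sum>T\<in>Pow ({..<n} - {i}). p ^ (n - 1 - card T) * (1 - p) ^ card T *
        mlext n A u ((mix T (sprof s \<theta>) (b \<theta>))(i := \<sigma>i)))"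

definition pay_nobs ::
  "nat \<Rightarrow> (nat \<Rightarrow> 'a set) \<Rightarrow> real \<Rightarrow> (nat \<Rightarrow> 'a dist) \<Rightarrow> ('a tprof \<Rightarrow> 'a mprof)
   \<Rightarrow> (nat \<Rightarrow> 'a ptype \<Rightarrow> 'a mixed) \<Rightarrow> nat \<Rightarrow> 'a ptype \<Rightarrow> 'a mixed \<Rightarrow> real" where
  "pay_nobs n A p \<mu> b s i t \<sigma>i =
     (\<Sum>\<theta>\<in>TPi n \<mu> i t. muminus n \<mu> i \<theta> * pay_obs n A p b s \<theta> i t \<sigma>i)"

definition is_equilibrium ::
  "nat \<Rightarrow> (nat \<Rightarrow> 'a set) \<Rightarrow> real \<Rightarrow> (nat \<Rightarrow> 'a dist) \<Rightarrow> ('a tprof \<Rightarrow> 'a mprof)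
   \<Rightarrow> (nat \<Rightarrow> 'a ptype \<Rightarrow> 'a mixed) \<Rightarrow> bool" where
  "is_equilibrium n A p \<mu> b s =
     ((\<forall>\<theta>\<in>TP n \<mu>. \<forall>i<n. b \<theta> i \<in> Delta (A i) \<and>
         (\<forall>\<sigma>\<in>Delta (A i). pay_obs n A p b s \<theta> i (\<theta> i) \<sigma> \<le> pay_obs n A p b s \<theta> i (\<theta> i) (b \<theta> i))) \<and>
      (\<forall>i<n. \<forall>t\<in>dsupp (\<mu> i). s i t \<in> Delta (A i) \<and>
         (\<forall>\<sigma>\<in>Delta (A i). pay_nobs n A p \<mu> b s i t \<sigma> \<le> pay_nobs n A p \<mu> b s i t (s i t))))"

definition Bp ::
  "nat \<Rightarrow> (nat \<Rightarrow> 'a set) \<Rightarrow> real \<Rightarrow> (nat \<Rightarrow> 'a dist)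
   \<Rightarrow> (('a tprof \<Rightarrow> 'a mprof) \<times> (nat \<Rightarrow> 'a ptype \<Rightarrow> 'a mixed)) set" where
  "Bp n A p \<mu> = {(b, s). is_equilibrium n A p \<mu> b s}"

definition outcome ::
  "nat \<Rightarrow> real \<Rightarrow> (nat \<Rightarrow> 'a dist) \<Rightarrow> ('a tprof \<Rightarrow> 'a mprof)
   \<Rightarrow> (nat \<Rightarrow> 'a ptype \<Rightarrow> 'a mixed) \<Rightarrow> 'a prof \<Rightarrow> real" where
  "outcome n p \<mu> b s a =
     (\<Sum>\<theta>\<in>TP n \<mu>. (\<Prod>i<n. \<mu> i (\<theta> i)) *
        (\<Sum>T\<in>Pow {..<n}. p ^ (n - card T) * (1 - p) ^ card T *
           (\<Prod>i<n. mix T (sprof s \<theta>) (b \<theta>) i (a i))))"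

definition avgfit ::
  "nat \<Rightarrow> (nat \<Rightarrow> 'a set) \<Rightarrow> (nat \<Rightarrow> 'a prof \<Rightarrow> real) \<Rightarrow> real \<Rightarrow> (nat \<Rightarrow> 'a dist)
   \<Rightarrow> ('a tprof \<Rightarrow> 'a mprof) \<Rightarrow> (nat \<Rightarrow> 'a ptype \<Rightarrow> 'a mixed) \<Rightarrow> nat \<Rightarrow> 'a ptype \<Rightarrow> real" where
  "avgfit n A \<pi> p \<mu> b s i t =
     (\<Sum>\<theta>\<in>TPi n \<mu> i t. muminus n \<mu> i \<theta> *
        (\<Sum>T\<in>Pow {..<n}. p ^ (n - card T) * (1 - p) ^ card T *
           mlext n A (\<pi> i) (mix T (sprof s \<theta>) (b \<theta>))))"

definition balanced ::
  "nat \<Rightarrow> (nat \<Rightarrow> 'a set) \<Rightarrow> (nat \<Rightarrow> 'a prof \<Rightarrow> real) \<Rightarrow> real \<Rightarrow> (nat \<Rightarrow> 'a dist)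
   \<Rightarrow> ('a tprof \<Rightarrow> 'a mprof) \<Rightarrow> (nat \<Rightarrow> 'a ptype \<Rightarrow> 'a mixed) \<Rightarrow> bool" where
  "balanced n A \<pi> p \<mu> b s =
     (\<forall>i<n. \<forall>t\<in>dsupp (\<mu> i). \<forall>t'\<in>dsupp (\<mu> i).
        avgfit n A \<pi> p \<mu> b s i t = avgfit n A \<pi> p \<mu> b s i t')"

definition postentry ::
  "(nat \<Rightarrow> 'a dist) \<Rightarrow> nat set \<Rightarrow> 'a tprof \<Rightarrow> (nat \<Rightarrow> real) \<Rightarrow> nat \<Rightarrow> 'a dist" where
  "postentry \<mu> J mt \<epsilon> =
     (\<lambda>i. if i \<in> J then (\<lambda>t. (1 - \<epsilon> i) * \<mu> i t + \<epsilon> i * (if t = mt i then 1 else 0)) else \<mu> i)"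

definition mdist :: "'a set \<Rightarrow> 'a mixed \<Rightarrow> 'a mixed \<Rightarrow> real" where
  "mdist S \<sigma> \<tau> = Max ((\<lambda>x. \<bar>\<sigma> x - \<tau> x\<bar>) ` S)"

definition Nearby ::
  "nat \<Rightarrow> (nat \<Rightarrow> 'a set) \<Rightarrow> real \<Rightarrow> (nat \<Rightarrow> 'a dist) \<Rightarrow> ('a tprof \<Rightarrow> 'a mprof)
   \<Rightarrow> (nat \<Rightarrow> 'a ptype \<Rightarrow> 'a mixed) \<Rightarrow> (nat \<Rightarrow> 'a dist) \<Rightarrow> real
   \<Rightarrow> (('a tprof \<Rightarrow> 'a mprof) \<times> (nat \<Rightarrow> 'a ptype \<Rightarrow> 'a mixed)) set" where
  "Nearby n A p \<mu> b s \<mu>' \<eta> =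
     {(b', s') \<in> Bp n A p \<mu>'.
        \<forall>\<theta>\<in>TP n \<mu>. \<forall>i<n. mdist (A i) (b' \<theta> i) (b \<theta> i) \<le> \<eta> \<and>
                          mdist (A i) (s' i (\<theta> i)) (s i (\<theta> i)) \<le> \<eta>}"

definition stable ::
  "nat \<Rightarrow> (nat \<Rightarrow> 'a set) \<Rightarrow> (nat \<Rightarrow> 'a prof \<Rightarrow> real) \<Rightarrow> real \<Rightarrow> (nat \<Rightarrow> 'a dist)
   \<Rightarrow> ('a tprof \<Rightarrow> 'a mprof) \<Rightarrow> (nat \<Rightarrow> 'a ptype \<Rightarrow> 'a mixed) \<Rightarrow> bool" where
  "stable n A \<pi> p \<mu> b s =
     (balanced n A \<pi> p \<mu> b s \<and>
      (\<forall>J mt. J \<noteq> {} \<and> J \<subseteq> {..<n} \<and> (\<forall>j\<in>J. mt j \<in> Theta n A - dsupp (\<mu> j)) \<longrightarrow>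
        (\<forall>\<eta>>0. \<exists>\<eta>b. 0 \<le> \<eta>b \<and> \<eta>b < \<eta> \<and> (\<exists>eb. 0 < eb \<and> eb < 1 \<and>
          (\<forall>\<epsilon>. (\<forall>j\<in>J. 0 < \<epsilon> j \<and> \<epsilon> j < 1) \<and> Max (\<epsilon> ` J) < eb \<longrightarrow>
             (let \<mu>' = postentry \<mu> J mt \<epsilon> in
               Nearby n A p \<mu> b s \<mu>' \<eta>b \<noteq> {} \<and>
               (\<forall>(b', s')\<in>Nearby n A p \<mu> b s \<mu>' \<eta>b.
                  (\<exists>j\<in>J. \<forall>t\<in>dsupp (\<mu> j).
                      avgfit n A \<pi> p \<mu>' b' s' j t > avgfit n A \<pi> p \<mu>' b' s' j (mt j)) \<or>
                  (\<forall>i<n. \<forall>t\<in>dsupp (\<mu>' i). \<forall>t'\<in>dsupp (\<mu>' i).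
                      avgfit n A \<pi> p \<mu>' b' s' i t = avgfit n A \<pi> p \<mu>' b' s' i t'))))))))"

definition stable_pure ::
  "nat \<Rightarrow> (nat \<Rightarrow> 'a set) \<Rightarrow> (nat \<Rightarrow> 'a prof \<Rightarrow> real) \<Rightarrow> real \<Rightarrow> 'a prof \<Rightarrow> bool" where
  "stable_pure n A \<pi> p a0 =
     (\<exists>\<mu> b s. ProdDist n A \<mu> \<and> (b, s) \<in> Bp n A p \<mu> \<and> stable n A \<pi> p \<mu> b s \<and>
        (\<forall>a\<in>PureProfs n A. outcome n p \<mu> b s a = (if a = a0 then 1 else 0)))"

end

theory Submission
  imports Defs
begin


lemma mlext_cong:
  assumes "\<And>j. j < n \<Longrightarrow> X j = Y j"
  shows "mlext n A u X = mlext n A u Y"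
  unfolding mlext_def using assms by (intro sum.cong prod.cong) auto

lemma Delta_le1:
  assumes "finite S" "\<sigma> \<in> Delta S"
  shows "0 \<le> \<sigma> x" "\<sigma> x \<le> 1"
proof -
  show "0 \<le> \<sigma> x" using assms by (auto simp: Delta_def)
  show "\<sigma> x \<le> 1"
  proof (cases "x \<in> S")
    case True
    have "\<sigma> x \<le> sum \<sigma> S" using assms True by (intro member_le_sum) (auto simp: Delta_def)
    then show ?thesis using assms by (auto simp: Delta_def)
  next
    case False then show ?thesis using assms by (auto simp: Delta_def)
  qed
qed

lemma sum_prod_PiE_Delta:
  assumes "\<And>j. j < n \<Longrightarrow> finite (A j)" "\<And>j. j < n \<Longrightarrow> X j \<in> Delta (A j)"
  shows "(\<Sum>a\<in>PureProfs n A. \<Prod>i<n. X i (a i)) = 1"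
proof -
  have "(\<Sum>a\<in>PureProfs n A. \<Prod>i<n. X i (a i)) = (\<Prod>i<n. \<Sum>y\<in>A i. X i y)"
    unfolding PureProfs_def using assms by (subst prod_sum_PiE) auto
  also have "\<dots> = 1" using assms by (intro prod.neutral) (auto simp: Delta_def)
  finally show ?thesis .
qed

lemma mlext_const:
  assumes "\<And>j. j < n \<Longrightarrow> finite (A j)" "\<And>j. j < n \<Longrightarrow> X j \<in> Delta (A j)"
  shows "mlext n A (\<lambda>a. if a \<in> PureProfs n A then c else 0) X = c"
proof -
  have "mlext n A (\<lambda>a. if a \<in> PureProfs n A then c else 0) X = (\<Sum>a\<in>PureProfs n A. \<Prod>i<n. X i (a i)) * c"
    unfolding mlext_def by (simp add: sum_distrib_right)
  then show ?thesis using sum_prod_PiE_Delta[OF assms] by simp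
qed

lemma mlext_bound:
  assumes "\<And>j. j < n \<Longrightarrow> finite (A j)" "\<And>j. j < n \<Longrightarrow> X j \<in> Delta (A j)"
  shows "\<bar>mlext n A u X\<bar> \<le> (\<Sum>a\<in>PureProfs n A. \<bar>u a\<bar>)"
proof -
  have "\<bar>mlext n A u X\<bar> \<le> (\<Sum>a\<in>PureProfs n A. \<bar>(\<Prod>i<n. X i (a i)) * u a\<bar>)"
    unfolding mlext_def by (rule sum_abs)
  also have "\<dots> \<le> (\<Sum>a\<in>PureProfs n A. \<bar>u a\<bar>)"
  proof (rule sum_mono)
    fix a
    have "0 \<le> (\<Prod>i<n. X i (a i))" 
      by (rule prod_nonneg) (use Delta_le1(1)[OF assms(1) assms(2)] in auto)
    moreover have "(\<Prod>i<n. X i (a i)) \<le> 1"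
      by (rule prod_le_1) (use Delta_le1[OF assms(1) assms(2)] in auto)
    ultimately show "\<bar>(\<Prod>i<n. X i (a i)) * u a\<bar> \<le> \<bar>u a\<bar>"
      by (simp add: abs_mult mult_left_le_one_le)
  qed
  finally show ?thesis .
qed

lemma pa_Delta:
  assumes "astar \<in> PureProfs n A" "finite (A i)" "i < n"
  shows "pure_mixed astar i \<in> Delta (A i)"
  using assms unfolding Delta_def pure_mixed_def PureProfs_def
  by (auto simp: PiE_iff)

lemma point_mass:
  assumes fin: "\<And>j. j < n \<Longrightarrow> finite (A j)" and D: "\<And>j. j < n \<Longrightarrow> X j \<in> Delta (A j)"
    and as: "astar \<in> PureProfs n A"
    and z: "\<And>a. a \<in> PureProfs n A \<Longrightarrow> a \<noteq> astar \<Longrightarrow> (\<Prod>i<n. X i (a i)) = 0"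
    and i: "i < n"
  shows "X i = pure_mixed astar i"
proof -
  have pos: "\<exists>y\<in>A j. X j y > 0" if "j < n" for j
  proof (rule ccontr)
    assume nn: "\<not> ?thesis"
    have "\<forall>y\<in>A j. X j y = 0" 
    proof
      fix y assume "y \<in> A j"
      have "0 \<le> X j y" using Delta_le1(1)[OF fin[OF that] D[OF that]] .
      moreover have "\<not> 0 < X j y" using nn \<open>y \<in> A j\<close> by blast
      ultimately show "X j y = 0" by linarith
    qed
    then have "sum (X j) (A j) = 0" by simp
    then show False using D[OF that] by (simp add: Delta_def)
  qed
  define w where "w j = (SOME y. y \<in> A j \<and> X j y > 0)" for j
  have w: "w j \<in> A j \<and> X j (w j) > 0" if "j < n" for j
  proof -
    have "\<exists>y. y \<in> A j \<and> X j y > 0" using pos[OF that] by blast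
    then show ?thesis unfolding w_def by (rule someI_ex)
  qed
  have zero: "X i x = 0" if "x \<noteq> astar i" for x
  proof (cases "x \<in> A i")
    case False then show ?thesis using D[OF i] by (auto simp: Delta_def)
  next
    case True
    define a where "a = (\<lambda>j. if j < n then (if j = i then x else w j) else undefined)"
    have aP: "a \<in> PureProfs n A" using w True i unfolding a_def PureProfs_def by (auto simp: PiE_iff extensional_def)
    have "a \<noteq> astar" using that i unfolding a_def by auto
    then have 0: "(\<Prod>j<n. X j (a j)) = 0" using z aP by blast
    have e1: "(\<Prod>j<n. X j (a j)) = X i (a i) * (\<Prod>j\<in>{..<n}-{i}. X j (a j))"
      using i by (subst prod.remove[of _ i]) auto
    have e2: "(\<Prod>j\<in>{..<n}-{i}. X j (a j)) > 0"
      using w unfolding a_def by (intro prod_pos) auto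
    have e3: "a i = x" unfolding a_def using i by simp
    have "X i x * (\<Prod>j\<in>{..<n}-{i}. X j (a j)) = 0" using e1 e3 0 by metis
    then show ?thesis using e2 by (metis mult_eq_0_iff less_irrefl)
  qed
  have ai: "astar i \<in> A i" using as i by (auto simp: PureProfs_def PiE_iff)
  have "sum (X i) (A i) = X i (astar i) + sum (X i) (A i - {astar i})"
    using fin[OF i] ai by (subst sum.remove) auto
  moreover have "sum (X i) (A i - {astar i}) = 0" using zero by (intro sum.neutral) auto
  ultimately have "X i (astar i) = 1" using D[OF i] by (simp add: Delta_def)
  then show ?thesis using zero unfolding pure_mixed_def by auto
qed


lemma sum_muminus:
  assumes fin: "\<And>j. j < n \<Longrightarrow> finite (dsupp (\<mu> j))" and i: "i < n"
  shows "(\<Sum>\<theta>\<in>TPi n \<mu> i t. muminus n \<mu> i \<theta>) = (\<Prod>j\<in>{..<n}-{i}. \<Sum>x\<in>dsupp (\<mu> j). \<mu> j x)"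
proof -
  define f where "f j x = (if j = i then 1 else \<mu> j x)" for j x
  have m: "muminus n \<mu> i \<theta> = (\<Prod>j<n. f j (\<theta> j))" for \<theta>
  proof -
    have "(\<Prod>j<n. f j (\<theta> j)) = f i (\<theta> i) * (\<Prod>j\<in>{..<n}-{i}. f j (\<theta> j))"
      using i by (subst prod.remove[of _ i]) auto
    also have "\<dots> = muminus n \<mu> i \<theta>" unfolding muminus_def f_def by (auto intro: prod.cong)
    finally show ?thesis by simp
  qed
  have "(\<Sum>\<theta>\<in>TPi n \<mu> i t. muminus n \<mu> i \<theta>) = (\<Prod>j<n. \<Sum>x\<in>(if j = i then {t} else dsupp (\<mu> j)). f j x)"
    unfolding m TPi_def using fin by (subst prod_sum_PiE) auto
  also have "\<dots> = (\<Sum>x\<in>{t}. f i x) * (\<Prod>j\<in>{..<n}-{i}. \<Sum>x\<in>(if j = i then {t} else dsupp (\<mu> j)). f j x)"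
    using i by (subst prod.remove[of _ i]) auto
  also have "\<dots> = (\<Prod>j\<in>{..<n}-{i}. \<Sum>x\<in>dsupp (\<mu> j). \<mu> j x)"
    unfolding f_def by (auto intro!: prod.cong sum.cong)
  finally show ?thesis .
qed

lemma pay_obs_pa:
  assumes "\<And>j. j < n \<Longrightarrow> j \<noteq> i \<Longrightarrow> s'' j (\<theta> j) = pure_mixed astar j \<and> b'' \<theta> j = pure_mixed astar j"
  shows "pay_obs n A p b'' s'' \<theta> i u \<sigma> = (\<Sum>T\<in>Pow ({..<n}-{i}). p^(n-1-card T) * (1-p)^card T * mlext n A u ((pure_mixed astar)(i:=\<sigma>)))"
  unfolding pay_obs_def
proof (rule sum.cong[OF refl])
  fix T
  have "mlext n A u ((mix T (sprof s'' \<theta>) (b'' \<theta>))(i := \<sigma>)) = mlext n A u ((pure_mixed astar)(i:=\<sigma>))"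
    by (rule mlext_cong) (auto simp: mix_def sprof_def assms)
  then show "p ^ (n - 1 - card T) * (1 - p) ^ card T * mlext n A u ((mix T (sprof s'' \<theta>) (b'' \<theta>))(i := \<sigma>)) =
         p ^ (n - 1 - card T) * (1 - p) ^ card T * mlext n A u ((pure_mixed astar)(i := \<sigma>))" by simp
qed

lemma pay_obs_const:
  assumes fin: "\<And>j. j < n \<Longrightarrow> finite (A j)"
    and D: "\<And>j. j < n \<Longrightarrow> s'' j (\<theta> j) \<in> Delta (A j) \<and> b'' \<theta> j \<in> Delta (A j)"
    and \<sigma>: "\<sigma> \<in> Delta (A i)"
  shows "pay_obs n A p b'' s'' \<theta> i (\<lambda>a. if a \<in> PureProfs n A then c else 0) \<sigma> = (\<Sum>T\<in>Pow ({..<n}-{i}). p^(n-1-card T) * (1-p)^card T * c)"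
  unfolding pay_obs_def
proof (rule sum.cong[OF refl])
  fix T
  have "mlext n A (\<lambda>a. if a \<in> PureProfs n A then c else 0) ((mix T (sprof s'' \<theta>) (b'' \<theta>))(i := \<sigma>)) = c"
    by (rule mlext_const[OF fin]) (auto simp: mix_def sprof_def D \<sigma>)
  then show "p ^ (n - 1 - card T) * (1 - p) ^ card T * mlext n A (\<lambda>a. if a \<in> PureProfs n A then c else 0) ((mix T (sprof s'' \<theta>) (b'' \<theta>))(i := \<sigma>)) =
         p ^ (n - 1 - card T) * (1 - p) ^ card T * c" by simp
qed

lemma weights_pos:
  fixes e :: "nat set \<Rightarrow> real"
  assumes p: "0 \<le> p" "p \<le> 1" and L: "0 \<le> L" and e0: "e {} \<ge> \<delta>"
    and eL: "\<And>T. T \<in> Pow {..<n} \<Longrightarrow> e T \<ge> - L"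
    and big: "p^n * \<delta> > 2^n * (1-p) * L"
  shows "(\<Sum>T\<in>Pow {..<n}. p^(n - card T) * (1-p)^card T * e T) > 0"
proof -
  have fin: "finite (Pow {..<n::nat})" by simp
  have split: "(\<Sum>T\<in>Pow {..<n}. p^(n - card T) * (1-p)^card T * e T)
      = p^n * e {} + (\<Sum>T\<in>Pow {..<n} - {{}}. p^(n - card T) * (1-p)^card T * e T)"
    using fin by (subst sum.remove[of _ "{}"]) auto
  have trm: "p^(n - card T) * (1-p)^card T * e T \<ge> - ((1-p) * L)" if T: "T \<in> Pow {..<n} - {{}}" for T
  proof -
    have fT: "finite T" using T finite_subset by auto
    have c1: "card T \<ge> 1" using T fT by (auto simp: Suc_le_eq card_gt_0_iff)
    have w0: "0 \<le> p^(n - card T) * (1-p)^card T" using p by simp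
    have "p^(n - card T) \<le> 1" using p by (simp add: power_le_one)
    moreover have "(1-p)^card T \<le> (1-p)^1" using p c1 by (intro power_decreasing) auto
    ultimately have w1: "p^(n - card T) * (1-p)^card T \<le> 1 - p"
      using p by (metis mult_le_one power_one_right mult_left_le_one_le zero_le_power diff_ge_0_iff_ge mult_mono' mult_1)
    have "p^(n - card T) * (1-p)^card T * e T \<ge> p^(n - card T) * (1-p)^card T * (- L)"
      using w0 eL T by (intro mult_left_mono) auto
    moreover have "p^(n - card T) * (1-p)^card T * (- L) \<ge> (1-p) * (-L)"
      using w1 L by (simp add: mult_right_mono)
    ultimately show ?thesis by simp
  qed
  have "(\<Sum>T\<in>Pow {..<n} - {{}}. p^(n - card T) * (1-p)^card T * e T) \<ge> (\<Sum>T\<in>Pow {..<n} - {{}}. - ((1-p) * L))"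
    using trm by (intro sum_mono) auto
  moreover have "(\<Sum>T\<in>Pow {..<n} - {{}}. - ((1-p) * L)) \<ge> - (2^n * (1-p) * L)"
  proof -
    have "card (Pow {..<n::nat} - {{}}) \<le> card (Pow {..<n::nat})" by (rule card_mono[OF fin]) auto
    then have "card (Pow {..<n::nat} - {{}}) \<le> 2^n" by (simp add: card_Pow)
    then have "real (card (Pow {..<n::nat} - {{}})) * ((1-p) * L) \<le> 2^n * ((1-p) * L)"
      using p L by (intro mult_right_mono) (auto simp del: of_nat_power simp: of_nat_power[symmetric])
    then show ?thesis by simp
  qed
  moreover have "p^n * e {} \<ge> p^n * \<delta>" using e0 p by (intro mult_left_mono) auto
  ultimately show ?thesis using split big by linarith
qed



lemma Delta_nonneg: "\<sigma> \<in> Delta S \<Longrightarrow> 0 \<le> \<sigma> x" by (simp add: Delta_def)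

theorem mainTheorem14:
  fixes n :: nat and A :: "nat \<Rightarrow> 'a set" and \<pi> :: "nat \<Rightarrow> 'a prof \<Rightarrow> real"
    and astar :: "'a prof"
  assumes "1 \<le> n"
    and "\<forall>i<n. finite (A i) \<and> A i \<noteq> {}"
    and "astar \<in> PureProfs n A"
    and "\<forall>pb. 0 < pb \<and> pb < 1 \<longrightarrow> (\<exists>p. pb < p \<and> p < 1 \<and> stable_pure n A \<pi> p astar)"
  shows "weakly_pareto_efficient n A \<pi> (pure_mixed astar)"
proof (rule ccontr)
  assume "\<not> ?thesis"
  then obtain \<sigma>' where \<sigma>'M: "\<sigma>' \<in> MixedProfs n A"
    and dom: "\<And>i. i < n \<Longrightarrow> mlext n A (\<pi> i) \<sigma>' > mlext n A (\<pi> i) (pure_mixed astar)"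
    unfolding weakly_pareto_efficient_def strongly_pareto_dominates_def by blast
  define pa where "pa = pure_mixed astar"
  have n0: "0 < n" using assms(1) by simp
  have finA: "\<And>j. j < n \<Longrightarrow> finite (A j)" and neA: "\<And>j. j < n \<Longrightarrow> A j \<noteq> {}" using assms(2) by auto
  have as: "astar \<in> PureProfs n A" by (rule assms(3))
  have paD: "\<And>j. j < n \<Longrightarrow> pa j \<in> Delta (A j)" unfolding pa_def using pa_Delta[OF as finA] .
  have \<sigma>'D: "\<And>j. j < n \<Longrightarrow> \<sigma>' j \<in> Delta (A j)" using \<sigma>'M unfolding MixedProfs_def by auto
  define P where "P i = mlext n A (\<pi> i) pa" for i
  define \<delta> where "\<delta> = Min ((\<lambda>i. mlext n A (\<pi> i) \<sigma>' - P i) ` {..<n})"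
  have \<delta>pos: "\<delta> > 0" unfolding \<delta>_def using n0 dom by (subst Min_gr_iff) (auto simp: P_def pa_def)
  have \<delta>le: "\<And>i. i < n \<Longrightarrow> \<delta> \<le> mlext n A (\<pi> i) \<sigma>' - P i" unfolding \<delta>_def by (rule Min_le) auto
  define K where "K = (\<Sum>i<n. \<Sum>a\<in>PureProfs n A. \<bar>\<pi> i a\<bar>)"
  have K0: "K \<ge> 0" unfolding K_def by (intro sum_nonneg) auto
  have Kb: "\<And>i. i < n \<Longrightarrow> (\<Sum>a\<in>PureProfs n A. \<bar>\<pi> i a\<bar>) \<le> K"
    unfolding K_def by (rule member_le_sum[where f="\<lambda>i. \<Sum>a\<in>PureProfs n A. \<bar>\<pi> i a\<bar>"]) (auto intro: sum_nonneg)
  define C where "C = 2^n * (2 * K)"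
  have C0: "C \<ge> 0" unfolding C_def using K0 by simp
  define pb where "pb = 1 - \<delta> / (real n * \<delta> + C + \<delta>)"
  have den: "real n * \<delta> + C + \<delta> > \<delta>" using n0 \<delta>pos C0 by (simp add: add_pos_nonneg)
  have pb01: "0 < pb \<and> pb < 1" unfolding pb_def using den \<delta>pos by (auto simp: field_simps)
  obtain p where p: "pb < p" "p < 1" and sp: "stable_pure n A \<pi> p astar" using assms(4) pb01 by blast
  have p0: "0 < p" using pb01 p by simp
  have big: "p^n * \<delta> > C * (1-p)"
  proof -
    define r where "r = 1 - p"
    have r: "r * (real n * \<delta> + C + \<delta>) < \<delta>"
    proof -
      have "r < \<delta> / (real n * \<delta> + C + \<delta>)" using p(1) unfolding r_def pb_def by simp
      then show ?thesis using den \<delta>pos by (simp add: field_simps)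
    qed
    have "1 + real n * (- r) \<le> (1 + - r)^n" using p p0 unfolding r_def by (intro Bernoulli_inequality) simp
    then have "p^n \<ge> 1 - real n * r" unfolding r_def by (simp add: algebra_simps)
    then have "p^n * \<delta> \<ge> (1 - real n * r) * \<delta>" using \<delta>pos by (intro mult_right_mono) auto
    moreover have "(1 - real n * r) * \<delta> > C * r"
    proof -
      have "0 \<le> \<delta> * r" using \<delta>pos p unfolding r_def by simp
      then show ?thesis using r by (simp add: algebra_simps)
    qed
    ultimately show ?thesis unfolding r_def by linarith
  qed
  obtain \<mu> b s where PD: "ProdDist n A \<mu>" and bs: "(b, s) \<in> Bp n A p \<mu>" and st: "stable n A \<pi> p \<mu> b s"
    and oc: "\<forall>a\<in>PureProfs n A. outcome n p \<mu> b s a = (if a = astar then 1 else 0)"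
    using sp unfolding stable_pure_def by blast
  have eq: "is_equilibrium n A p \<mu> b s" using bs unfolding Bp_def by simp
  have \<mu>0: "\<And>j x. j < n \<Longrightarrow> 0 \<le> \<mu> j x" and \<mu>fin: "\<And>j. j < n \<Longrightarrow> finite (dsupp (\<mu> j))"
    and \<mu>sum: "\<And>j. j < n \<Longrightarrow> sum (\<mu> j) (dsupp (\<mu> j)) = 1"
    using PD unfolding ProdDist_def fsdist_def by auto
  have \<mu>ne: "\<And>j. j < n \<Longrightarrow> \<exists>x. x \<in> dsupp (\<mu> j)"
    using \<mu>sum by (metis equals0I sum.empty zero_neq_one)
  define w0 where "w0 j = (SOME x. x \<in> dsupp (\<mu> j))" for j
  have w0: "\<And>j. j < n \<Longrightarrow> w0 j \<in> dsupp (\<mu> j)" unfolding w0_def using \<mu>ne by (metis someI_ex)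
  define ext where "ext i t = (\<lambda>j. if j < n then (if j = i then t else w0 j) else undefined)" for i t
  have extTP: "\<And>i t. i < n \<Longrightarrow> t \<in> dsupp (\<mu> i) \<Longrightarrow> ext i t \<in> TP n \<mu> \<and> ext i t i = t"
    unfolding ext_def TP_def using w0 by (auto simp: PiE_iff extensional_def)
  have TPfin: "finite (TP n \<mu>)" unfolding TP_def using \<mu>fin by (intro finite_PiE) auto
  have bD: "\<And>\<theta> i. \<theta> \<in> TP n \<mu> \<Longrightarrow> i < n \<Longrightarrow> b \<theta> i \<in> Delta (A i)" using eq unfolding is_equilibrium_def by blast
  have sD: "\<And>i t. i < n \<Longrightarrow> t \<in> dsupp (\<mu> i) \<Longrightarrow> s i t \<in> Delta (A i)" using eq unfolding is_equilibrium_def by blast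
  have TPsupp: "\<And>\<theta> i. \<theta> \<in> TP n \<mu> \<Longrightarrow> i < n \<Longrightarrow> \<theta> i \<in> dsupp (\<mu> i)" unfolding TP_def by auto
  \<comment> \<open>outcome is point mass: all terms vanish\<close>
  have zero_terms: "(\<Prod>i<n. mix T (sprof s \<theta>) (b \<theta>) i (a i)) = 0"
    if \<theta>: "\<theta> \<in> TP n \<mu>" and T: "T \<in> Pow {..<n}" and a: "a \<in> PureProfs n A" "a \<noteq> astar" for \<theta> T a
  proof -
    have mixnn: "\<And>\<theta> T i x. \<theta> \<in> TP n \<mu> \<Longrightarrow> i < n \<Longrightarrow> 0 \<le> mix T (sprof s \<theta>) (b \<theta>) i x"
      unfolding mix_def sprof_def by (auto intro: Delta_nonneg[OF bD] Delta_nonneg[OF sD] TPsupp)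
    define inner where "inner \<theta>' = (\<Sum>T\<in>Pow {..<n}. p ^ (n - card T) * (1 - p) ^ card T *
           (\<Prod>i<n. mix T (sprof s \<theta>') (b \<theta>') i (a i)))" for \<theta>'
    have innn: "\<And>\<theta>'. \<theta>' \<in> TP n \<mu> \<Longrightarrow> 0 \<le> inner \<theta>'"
      unfolding inner_def using p0 p mixnn by (intro sum_nonneg mult_nonneg_nonneg prod_nonneg) auto
    have wpos: "\<And>\<theta>'. \<theta>' \<in> TP n \<mu> \<Longrightarrow> 0 < (\<Prod>i<n. \<mu> i (\<theta>' i))"
      using TPsupp \<mu>0 by (intro prod_pos) (fastforce simp: dsupp_def order.order_iff_strict)
    have "outcome n p \<mu> b s a = (\<Sum>\<theta>'\<in>TP n \<mu>. (\<Prod>i<n. \<mu> i (\<theta>' i)) * inner \<theta>')"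
      unfolding outcome_def inner_def ..
    then have "(\<Sum>\<theta>'\<in>TP n \<mu>. (\<Prod>i<n. \<mu> i (\<theta>' i)) * inner \<theta>') = 0" using oc a by simp
    then have "(\<Prod>i<n. \<mu> i (\<theta> i)) * inner \<theta> = 0"
      using TPfin innn wpos \<theta> by (subst (asm) sum_nonneg_eq_0_iff) (auto intro: mult_nonneg_nonneg less_imp_le)
    then have "inner \<theta> = 0" using wpos[OF \<theta>] by (metis mult_eq_0_iff less_irrefl)
    then have "p ^ (n - card T) * (1 - p) ^ card T * (\<Prod>i<n. mix T (sprof s \<theta>) (b \<theta>) i (a i)) = 0"
      unfolding inner_def using T p0 p mixnn \<theta>
      by (subst (asm) sum_nonneg_eq_0_iff) (auto intro!: mult_nonneg_nonneg prod_nonneg)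
    then show ?thesis using p0 p by simp
  qed
  have bpa: "\<And>\<theta> i. \<theta> \<in> TP n \<mu> \<Longrightarrow> i < n \<Longrightarrow> b \<theta> i = pa i"
  proof -
    fix \<theta> i assume \<theta>: "\<theta> \<in> TP n \<mu>" and i: "i < n"
    show "b \<theta> i = pa i" unfolding pa_def
    proof (rule point_mass[OF finA bD[OF \<theta>] as _ i])
      fix a assume "a \<in> PureProfs n A" "a \<noteq> astar"
      from zero_terms[OF \<theta> _ this, of "{}"] show "(\<Prod>i<n. b \<theta> i (a i)) = 0" by (simp add: mix_def)
    qed
  qed
  have spa: "\<And>i t. i < n \<Longrightarrow> t \<in> dsupp (\<mu> i) \<Longrightarrow> s i t = pa i"
  proof -
    fix i t assume i: "i < n" and t: "t \<in> dsupp (\<mu> i)"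
    define \<theta> where "\<theta> = ext i t"
    have \<theta>: "\<theta> \<in> TP n \<mu>" "\<theta> i = t" using extTP[OF i t] unfolding \<theta>_def by auto
    have "sprof s \<theta> i = pa i" unfolding pa_def
    proof (rule point_mass[OF finA _ as _ i])
      fix j assume "j < n" then show "sprof s \<theta> j \<in> Delta (A j)" unfolding sprof_def using sD TPsupp \<theta> by blast
    next
      fix a assume "a \<in> PureProfs n A" "a \<noteq> astar"
      from zero_terms[OF \<theta>(1) _ this, of "{..<n}"]
      show "(\<Prod>i<n. sprof s \<theta> i (a i)) = 0" by (simp add: mix_def)
    qed
    then show "s i t = pa i" using \<theta> unfolding sprof_def by simp
  qed
  define c where "c j = 1 + (\<Sum>t\<in>dsupp (\<mu> j). \<bar>t astar\<bar>)" for j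
  define mt where "mt j = (\<lambda>a. if a \<in> PureProfs n A then c j else 0)" for j
  have mtT: "\<And>j. mt j \<in> Theta n A" unfolding mt_def Theta_def by auto
  have mtn: "\<And>j. j < n \<Longrightarrow> mt j \<notin> dsupp (\<mu> j)"
  proof
    fix j assume j: "j < n" and m: "mt j \<in> dsupp (\<mu> j)"
    have "\<bar>mt j astar\<bar> \<le> (\<Sum>t\<in>dsupp (\<mu> j). \<bar>t astar\<bar>)"
      by (rule member_le_sum[where f="\<lambda>t. \<bar>t astar\<bar>"]) (use m \<mu>fin[OF j] in auto)
    moreover have "mt j astar = c j" unfolding mt_def using as by simp
    moreover have "(\<Sum>t\<in>dsupp (\<mu> j). \<bar>t astar\<bar>) \<ge> 0" by (rule sum_nonneg) auto
    ultimately show False unfolding c_def by simp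
  qed
  have Jok: "{..<n} \<noteq> {} \<and> {..<n} \<subseteq> {..<n} \<and> (\<forall>j\<in>{..<n}. mt j \<in> Theta n A - dsupp (\<mu> j))"
    using n0 mtT mtn by auto
  obtain \<eta>b eb where \<eta>b: "0 \<le> \<eta>b" and eb: "0 < eb" "eb < 1"
    and stp: "\<forall>\<epsilon>. (\<forall>j\<in>{..<n}. 0 < \<epsilon> j \<and> \<epsilon> j < 1) \<and> Max (\<epsilon> ` {..<n}) < eb \<longrightarrow>
             (let \<mu>' = postentry \<mu> {..<n} mt \<epsilon> in
               Nearby n A p \<mu> b s \<mu>' \<eta>b \<noteq> {} \<and>
               (\<forall>(b', s')\<in>Nearby n A p \<mu> b s \<mu>' \<eta>b.
                  (\<exists>j\<in>{..<n}. \<forall>t\<in>dsupp (\<mu> j).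
                      avgfit n A \<pi> p \<mu>' b' s' j t > avgfit n A \<pi> p \<mu>' b' s' j (mt j)) \<or>
                  (\<forall>i<n. \<forall>t\<in>dsupp (\<mu>' i). \<forall>t'\<in>dsupp (\<mu>' i).
                      avgfit n A \<pi> p \<mu>' b' s' i t = avgfit n A \<pi> p \<mu>' b' s' i t')))"
  proof -
    have S2: "\<forall>J mt. J \<noteq> {} \<and> J \<subseteq> {..<n} \<and> (\<forall>j\<in>J. mt j \<in> Theta n A - dsupp (\<mu> j)) \<longrightarrow>
        (\<forall>\<eta>>0. \<exists>\<eta>b. 0 \<le> \<eta>b \<and> \<eta>b < \<eta> \<and> (\<exists>eb. 0 < eb \<and> eb < 1 \<and>
          (\<forall>\<epsilon>. (\<forall>j\<in>J. 0 < \<epsilon> j \<and> \<epsilon> j < 1) \<and> Max (\<epsilon> ` J) < eb \<longrightarrow>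
             (let \<mu>' = postentry \<mu> J mt \<epsilon> in
               Nearby n A p \<mu> b s \<mu>' \<eta>b \<noteq> {} \<and>
               (\<forall>(b', s')\<in>Nearby n A p \<mu> b s \<mu>' \<eta>b.
                  (\<exists>j\<in>J. \<forall>t\<in>dsupp (\<mu> j).
                      avgfit n A \<pi> p \<mu>' b' s' j t > avgfit n A \<pi> p \<mu>' b' s' j (mt j)) \<or>
                  (\<forall>i<n. \<forall>t\<in>dsupp (\<mu>' i). \<forall>t'\<in>dsupp (\<mu>' i).
                      avgfit n A \<pi> p \<mu>' b' s' i t = avgfit n A \<pi> p \<mu>' b' s' i t'))))))"
      using st unfolding stable_def by (rule conjunct2)
    note S3 = S2[THEN spec[of _ "{..<n}"], THEN spec[of _ mt], THEN mp, OF Jok, THEN spec[of _ 1], THEN mp, OF zero_less_one]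
    show ?thesis using S3 by (elim exE conjE) (rule that; assumption)
  qed
  define \<epsilon> where "\<epsilon> = (\<lambda>j::nat. eb / 2)"
  have img: "\<epsilon> ` {..<n} = {eb/2}" unfolding \<epsilon>_def using n0 by auto
  have \<epsilon>ok: "(\<forall>j\<in>{..<n}. 0 < \<epsilon> j \<and> \<epsilon> j < 1) \<and> Max (\<epsilon> ` {..<n}) < eb"
    unfolding img using eb by (simp add: \<epsilon>_def)
  define \<mu>' where "\<mu>' = postentry \<mu> {..<n} mt \<epsilon>"
  have NB: "\<forall>(b', s')\<in>Nearby n A p \<mu> b s \<mu>' \<eta>b.
                  (\<exists>j\<in>{..<n}. \<forall>t\<in>dsupp (\<mu> j).
                      avgfit n A \<pi> p \<mu>' b' s' j t > avgfit n A \<pi> p \<mu>' b' s' j (mt j)) \<or>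
                  (\<forall>i<n. \<forall>t\<in>dsupp (\<mu>' i). \<forall>t'\<in>dsupp (\<mu>' i).
                      avgfit n A \<pi> p \<mu>' b' s' i t = avgfit n A \<pi> p \<mu>' b' s' i t')"
    using stp[rule_format, OF \<epsilon>ok] unfolding \<mu>'_def Let_def by blast
  have \<mu>'j: "\<And>j x. j < n \<Longrightarrow> \<mu>' j x = (1 - eb/2) * \<mu> j x + eb/2 * (if x = mt j then 1 else 0)"
    by (simp add: \<mu>'_def postentry_def \<epsilon>_def)
  have \<mu>'0: "\<And>j x. j < n \<Longrightarrow> 0 \<le> \<mu>' j x" using \<mu>'j \<mu>0 eb by simp
  have mtpos: "\<And>j. j < n \<Longrightarrow> \<mu>' j (mt j) > 0"
  proof -
    fix j assume j: "j < n"
    have "\<mu> j (mt j) = 0" using mtn[OF j] by (simp add: dsupp_def)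
    then show "\<mu>' j (mt j) > 0" using \<mu>'j[OF j] eb by simp
  qed
  have ds': "\<And>j. j < n \<Longrightarrow> dsupp (\<mu>' j) = insert (mt j) (dsupp (\<mu> j))"
  proof -
    fix j assume j: "j < n"
    show "dsupp (\<mu>' j) = insert (mt j) (dsupp (\<mu> j))"
    proof (rule set_eqI)
      fix x
      show "x \<in> dsupp (\<mu>' j) \<longleftrightarrow> x \<in> insert (mt j) (dsupp (\<mu> j))"
      proof (cases "x = mt j")
        case True then show ?thesis using mtpos[OF j] by (simp add: dsupp_def)
      next
        case False
        then have "\<mu>' j x = (1 - eb/2) * \<mu> j x" using \<mu>'j[OF j] by simp
        moreover have "1 - eb/2 \<noteq> 0" using eb by simp
        ultimately show ?thesis using False by (simp add: dsupp_def)
      qed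
    qed
  qed
  have \<mu>'fin: "\<And>j. j < n \<Longrightarrow> finite (dsupp (\<mu>' j))" using ds' \<mu>fin by simp
  define b' where "b' \<theta> = (if \<forall>j<n. \<theta> j = mt j then \<sigma>' else pa)" for \<theta> :: "'a tprof"
  define s' where "s' = (\<lambda>(i::nat) (t::'a ptype). pa i)"
  have b'D: "\<And>\<theta> j. j < n \<Longrightarrow> b' \<theta> j \<in> Delta (A j)" unfolding b'_def using \<sigma>'D paD by auto
  have s'D: "\<And>\<theta> j. j < n \<Longrightarrow> s' j (\<theta> j) \<in> Delta (A j)" unfolding s'_def using paD by auto
  define G where "G i t \<sigma> = (\<Sum>T\<in>Pow ({..<n}-{i}). p^(n-1-card T) * (1-p)^card T * mlext n A t (pa(i:=\<sigma>)))"
    for i t \<sigma>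
  have oldBR: "\<And>i t \<sigma>. i < n \<Longrightarrow> t \<in> dsupp (\<mu> i) \<Longrightarrow> \<sigma> \<in> Delta (A i) \<Longrightarrow> G i t \<sigma> \<le> G i t (pa i)"
  proof -
    fix i t \<sigma> assume i: "i < n" and t: "t \<in> dsupp (\<mu> i)" and \<sigma>: "\<sigma> \<in> Delta (A i)"
    define \<theta> where "\<theta> = ext i t"
    have \<theta>: "\<theta> \<in> TP n \<mu>" "\<theta> i = t" using extTP[OF i t] unfolding \<theta>_def by auto
    have e: "pay_obs n A p b s \<theta> i u \<sigma>'' = G i u \<sigma>''" for u \<sigma>''
      unfolding G_def pa_def
      by (rule pay_obs_pa) (use spa bpa TPsupp \<theta> in \<open>auto simp: pa_def\<close>)
    have "pay_obs n A p b s \<theta> i (\<theta> i) \<sigma> \<le> pay_obs n A p b s \<theta> i (\<theta> i) (b \<theta> i)"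
      using eq \<theta> i \<sigma> unfolding is_equilibrium_def by blast
    then show "G i t \<sigma> \<le> G i t (pa i)" using e \<theta> bpa[OF \<theta>(1) i] by simp
  qed
  have notallmut: "\<And>\<theta> i. i < n \<Longrightarrow> \<theta> i \<in> dsupp (\<mu> i) \<Longrightarrow> \<not> (\<forall>j<n. \<theta> j = mt j)"
  proof
    fix \<theta> i assume i: "i < n" and t: "\<theta> i \<in> dsupp (\<mu> i)" and a: "\<forall>j<n. \<theta> j = mt j"
    then have "\<theta> i = mt i" by simp
    then show False using mtn[OF i] t by simp
  qed
  have newpay_inc: "\<And>\<theta> i u \<sigma>. i < n \<Longrightarrow> \<theta> i \<in> dsupp (\<mu> i) \<Longrightarrow> pay_obs n A p b' s' \<theta> i u \<sigma> = G i u \<sigma>"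
  proof -
    fix \<theta> i u \<sigma> assume i: "i < n" and t: "\<theta> i \<in> dsupp (\<mu> i)"
    have "b' \<theta> = pa" unfolding b'_def using notallmut[of i \<theta>, OF i t] by auto
    then show "pay_obs n A p b' s' \<theta> i u \<sigma> = G i u \<sigma>"
      unfolding G_def pa_def by (intro pay_obs_pa) (simp add: s'_def pa_def)
  qed
  have newpay_mut: "\<And>\<theta> i \<sigma>. i < n \<Longrightarrow> \<sigma> \<in> Delta (A i) \<Longrightarrow>
      pay_obs n A p b' s' \<theta> i (mt i) \<sigma> = (\<Sum>T\<in>Pow ({..<n}-{i}). p^(n-1-card T) * (1-p)^card T * c i)"
    unfolding mt_def by (rule pay_obs_const[OF finA]) (use b'D s'D in auto)
  have eq': "is_equilibrium n A p \<mu>' b' s'"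
    unfolding is_equilibrium_def
  proof (intro conjI ballI allI impI)
    fix \<theta> i assume \<theta>: "\<theta> \<in> TP n \<mu>'" and i: "i < n"
    show "b' \<theta> i \<in> Delta (A i)" using b'D i .
    fix \<sigma> assume \<sigma>: "\<sigma> \<in> Delta (A i)"
    have "\<theta> i \<in> dsupp (\<mu>' i)" using PiE_mem[of \<theta> "{..<n}" "\<lambda>j. dsupp (\<mu>' j)" i] \<theta> i unfolding TP_def by simp
    then have "\<theta> i \<in> insert (mt i) (dsupp (\<mu> i))" using ds'[OF i] by (simp only:)
    then show "pay_obs n A p b' s' \<theta> i (\<theta> i) \<sigma> \<le> pay_obs n A p b' s' \<theta> i (\<theta> i) (b' \<theta> i)"
    proof
      assume m: "\<theta> i = mt i"
      have e1: "pay_obs n A p b' s' \<theta> i (mt i) \<sigma> = (\<Sum>T\<in>Pow ({..<n}-{i}). p^(n-1-card T) * (1-p)^card T * c i)"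
        by (rule newpay_mut[OF i \<sigma>])
      have e2: "pay_obs n A p b' s' \<theta> i (mt i) (b' \<theta> i) = (\<Sum>T\<in>Pow ({..<n}-{i}). p^(n-1-card T) * (1-p)^card T * c i)"
        by (rule newpay_mut[OF i b'D[OF i]])
      show ?thesis unfolding m e1 e2 by (rule order_refl)
    next
      assume t: "\<theta> i \<in> dsupp (\<mu> i)"
      have "b' \<theta> = pa" unfolding b'_def using notallmut[of i \<theta>, OF i t] by auto
      then have bi: "b' \<theta> i = pa i" by simp
      have e1: "pay_obs n A p b' s' \<theta> i (\<theta> i) \<sigma> = G i (\<theta> i) \<sigma>" by (rule newpay_inc[of i \<theta>, OF i t])
      have e2: "pay_obs n A p b' s' \<theta> i (\<theta> i) (b' \<theta> i) = G i (\<theta> i) (pa i)"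
        unfolding bi by (rule newpay_inc[of i \<theta>, OF i t])
      show ?thesis unfolding e1 e2 by (rule oldBR[OF i t \<sigma>])
    qed
  next
    fix i t assume i: "i < n" and t: "t \<in> dsupp (\<mu>' i)"
    show "s' i t \<in> Delta (A i)" unfolding s'_def using paD i .
    fix \<sigma> assume \<sigma>: "\<sigma> \<in> Delta (A i)"
    have \<theta>i: "\<And>\<theta>. \<theta> \<in> TPi n \<mu>' i t \<Longrightarrow> \<theta> i = t"
    proof -
      fix \<theta> assume "\<theta> \<in> TPi n \<mu>' i t"
      then have "\<theta> i \<in> (\<lambda>j. if j = i then {t} else dsupp (\<mu>' j)) i"
        unfolding TPi_def by (rule PiE_mem) (use i in simp)
      then show "\<theta> i = t" by simp
    qed
    have mnn: "\<And>\<theta>. 0 \<le> muminus n \<mu>' i \<theta>" unfolding muminus_def by (rule prod_nonneg) (simp add: \<mu>'0)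
    have "t \<in> insert (mt i) (dsupp (\<mu> i))" using t unfolding ds'[OF i] .
    then show "pay_nobs n A p \<mu>' b' s' i t \<sigma> \<le> pay_nobs n A p \<mu>' b' s' i t (s' i t)"
    proof
      assume m: "t = mt i"
      have "pay_nobs n A p \<mu>' b' s' i t \<sigma> = pay_nobs n A p \<mu>' b' s' i t (s' i t)"
        unfolding pay_nobs_def m
      proof (rule sum.cong[OF refl])
        fix \<theta>
        have e1: "pay_obs n A p b' s' \<theta> i (mt i) \<sigma> = (\<Sum>T\<in>Pow ({..<n}-{i}). p^(n-1-card T) * (1-p)^card T * c i)"
          by (rule newpay_mut[OF i \<sigma>])
        have e2: "pay_obs n A p b' s' \<theta> i (mt i) (s' i (mt i)) = (\<Sum>T\<in>Pow ({..<n}-{i}). p^(n-1-card T) * (1-p)^card T * c i)"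
          by (rule newpay_mut[OF i]) (simp add: s'_def paD[OF i])
        show "muminus n \<mu>' i \<theta> * pay_obs n A p b' s' \<theta> i (mt i) \<sigma> = muminus n \<mu>' i \<theta> * pay_obs n A p b' s' \<theta> i (mt i) (s' i (mt i))"
          unfolding e1 e2 ..
      qed
      then show ?thesis by simp
    next
      assume tt: "t \<in> dsupp (\<mu> i)"
      show ?thesis unfolding pay_nobs_def
      proof (rule sum_mono)
        fix \<theta> assume \<theta>: "\<theta> \<in> TPi n \<mu>' i t"
        have t': "\<theta> i \<in> dsupp (\<mu> i)" using \<theta>i[OF \<theta>] tt by simp
        have "pay_obs n A p b' s' \<theta> i t \<sigma> \<le> pay_obs n A p b' s' \<theta> i t (s' i t)"
        proof -
          have e1: "pay_obs n A p b' s' \<theta> i t \<sigma> = G i t \<sigma>"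
            using newpay_inc[of i \<theta>, OF i t'] \<theta>i[OF \<theta>] by simp
          have e2: "pay_obs n A p b' s' \<theta> i t (s' i t) = G i t (pa i)"
            using newpay_inc[of i \<theta>, OF i t'] \<theta>i[OF \<theta>] by (simp add: s'_def)
          show ?thesis unfolding e1 e2 by (rule oldBR[OF i tt \<sigma>])
        qed
        then show "muminus n \<mu>' i \<theta> * pay_obs n A p b' s' \<theta> i t \<sigma> \<le> muminus n \<mu>' i \<theta> * pay_obs n A p b' s' \<theta> i t (s' i t)"
          using mnn by (intro mult_left_mono) auto
      qed
    qed
  qed
  have mdist0: "\<And>i f. i < n \<Longrightarrow> mdist (A i) f f = 0"
  proof -
    fix i :: nat and f :: "'a mixed" assume i: "i < n"
    have "(\<lambda>x. \<bar>f x - f x\<bar>) ` A i = {0}" using neA[OF i] by auto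
    then show "mdist (A i) f f = 0" unfolding mdist_def by simp
  qed
  have NBmem: "(b', s') \<in> Nearby n A p \<mu> b s \<mu>' \<eta>b"
    unfolding Nearby_def Bp_def
  proof (simp add: eq', intro ballI allI impI conjI)
    fix \<theta> i assume \<theta>: "\<theta> \<in> TP n \<mu>" and i: "i < n"
    have "b' \<theta> = pa" unfolding b'_def using notallmut[of i \<theta>, OF i TPsupp[OF \<theta> i]] by auto
    then show "mdist (A i) (b' \<theta> i) (b \<theta> i) \<le> \<eta>b" using bpa[OF \<theta> i] mdist0[OF i] \<eta>b by simp
    show "mdist (A i) (s' i (\<theta> i)) (s i (\<theta> i)) \<le> \<eta>b"
      using spa[OF i TPsupp[OF \<theta> i]] mdist0[OF i] \<eta>b by (simp add: s'_def)
  qed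
  define W where "W = (\<Sum>T\<in>Pow {..<n}. p^(n - card T) * (1-p)^card T)"
  define Fi where "Fi i \<theta> = (\<Sum>T\<in>Pow {..<n}. p^(n - card T) * (1-p)^card T * mlext n A (\<pi> i) (mix T (sprof s' \<theta>) (b' \<theta>)))"
    for i \<theta>
  have avg: "\<And>i t. avgfit n A \<pi> p \<mu>' b' s' i t = (\<Sum>\<theta>\<in>TPi n \<mu>' i t. muminus n \<mu>' i \<theta> * Fi i \<theta>)"
    unfolding avgfit_def Fi_def ..
  have sprof': "\<And>\<theta>. sprof s' \<theta> = pa" unfolding sprof_def s'_def by (rule ext) simp
  have Fi_inc: "\<And>i \<theta>. \<not> (\<forall>j<n. \<theta> j = mt j) \<Longrightarrow> Fi i \<theta> = W * P i"
  proof -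
    fix i \<theta> assume na: "\<not> (\<forall>j<n. \<theta> j = mt j)"
    have bb: "b' \<theta> = pa" unfolding b'_def using na by auto
    have "mix T pa pa = pa" for T unfolding mix_def by (rule ext) simp
    then show "Fi i \<theta> = W * P i" unfolding Fi_def W_def P_def sprof' bb by (simp add: sum_distrib_right)
  qed
  define \<theta>s where "\<theta>s = (\<lambda>j. if j < n then mt j else undefined)"
  have \<theta>s_mem: "\<And>i. i < n \<Longrightarrow> \<theta>s \<in> TPi n \<mu>' i (mt i)"
    unfolding TPi_def \<theta>s_def using ds' by (auto simp: PiE_iff extensional_def)
  have \<theta>s_uniq: "\<And>i t \<theta>. \<theta> \<in> TPi n \<mu>' i t \<Longrightarrow> (\<forall>j<n. \<theta> j = mt j) \<Longrightarrow> \<theta> = \<theta>s"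
  proof -
    fix i t \<theta> assume th: "\<theta> \<in> TPi n \<mu>' i t" and a: "\<forall>j<n. \<theta> j = mt j"
    have "\<theta> \<in> extensional {..<n}" using th unfolding TPi_def unfolding PiE_def by blast
    then show "\<theta> = \<theta>s" unfolding \<theta>s_def using a by (intro ext) (auto simp: extensional_def)
  qed
  define D where "D i = (\<Sum>T\<in>Pow {..<n}. p^(n - card T) * (1-p)^card T * (mlext n A (\<pi> i) (mix T pa \<sigma>') - P i))"
    for i
  have Fi_mut: "\<And>i. Fi i \<theta>s = W * P i + D i"
  proof -
    fix i
    have bb: "b' \<theta>s = \<sigma>'" unfolding b'_def \<theta>s_def by simp
    have "D i = (\<Sum>T\<in>Pow {..<n}. p^(n - card T) * (1-p)^card T * mlext n A (\<pi> i) (mix T pa \<sigma>')) - W * P i"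
      unfolding D_def W_def by (simp add: right_diff_distrib sum_subtractf sum_distrib_right)
    moreover have "Fi i \<theta>s = (\<Sum>T\<in>Pow {..<n}. p^(n - card T) * (1-p)^card T * mlext n A (\<pi> i) (mix T pa \<sigma>'))"
      unfolding Fi_def sprof' bb ..
    ultimately show "Fi i \<theta>s = W * P i + D i" by simp
  qed
  have Dpos: "\<And>i. i < n \<Longrightarrow> D i > 0"
  proof -
    fix i assume i: "i < n"
    have mD: "\<And>T j. j < n \<Longrightarrow> mix T pa \<sigma>' j \<in> Delta (A j)" unfolding mix_def using paD \<sigma>'D by simp
    show "D i > 0" unfolding D_def
    proof (rule weights_pos)
      show "0 \<le> p" "p \<le> 1" using p0 p by auto
      show "0 \<le> 2 * K" using K0 by simp
      have "mix {} pa \<sigma>' = \<sigma>'" unfolding mix_def by (rule ext) simp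
      then show "mlext n A (\<pi> i) (mix {} pa \<sigma>') - P i \<ge> \<delta>" using \<delta>le[OF i] by simp
      fix T :: "nat set"
      have "\<bar>mlext n A (\<pi> i) (mix T pa \<sigma>')\<bar> \<le> (\<Sum>a\<in>PureProfs n A. \<bar>\<pi> i a\<bar>)"
        by (rule mlext_bound[OF finA mD])
      then have b1: "\<bar>mlext n A (\<pi> i) (mix T pa \<sigma>')\<bar> \<le> K" using Kb[OF i] by linarith
      have "\<bar>P i\<bar> \<le> (\<Sum>a\<in>PureProfs n A. \<bar>\<pi> i a\<bar>)" unfolding P_def by (rule mlext_bound[OF finA paD])
      then have b2: "\<bar>P i\<bar> \<le> K" using Kb[OF i] by linarith
      show "mlext n A (\<pi> i) (mix T pa \<sigma>') - P i \<ge> - (2 * K)" using b1 b2 by linarith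
    next
      show "p^n * \<delta> > 2^n * (1-p) * (2 * K)" using big unfolding C_def by (simp add: mult_ac)
    qed
  qed
  define S where "S i = (\<Prod>j\<in>{..<n}-{i}. \<Sum>x\<in>dsupp (\<mu>' j). \<mu>' j x)" for i
  have avg_inc: "\<And>i t. i < n \<Longrightarrow> t \<in> dsupp (\<mu> i) \<Longrightarrow> avgfit n A \<pi> p \<mu>' b' s' i t = S i * (W * P i)"
  proof -
    fix i t assume i: "i < n" and t: "t \<in> dsupp (\<mu> i)"
    have "avgfit n A \<pi> p \<mu>' b' s' i t = (\<Sum>\<theta>\<in>TPi n \<mu>' i t. muminus n \<mu>' i \<theta> * (W * P i))"
      unfolding avg
    proof (rule sum.cong[OF refl])
      fix \<theta> assume th: "\<theta> \<in> TPi n \<mu>' i t"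
      have "\<theta> i \<in> (\<lambda>j. if j = i then {t} else dsupp (\<mu>' j)) i"
        using th unfolding TPi_def by (rule PiE_mem) (use i in simp)
      then have "\<theta> i = t" by simp
      then have "\<not> (\<forall>j<n. \<theta> j = mt j)" using mtn[OF i] t i by metis
      then show "muminus n \<mu>' i \<theta> * Fi i \<theta> = muminus n \<mu>' i \<theta> * (W * P i)" using Fi_inc by simp
    qed
    also have "\<dots> = S i * (W * P i)"
      unfolding S_def sum_distrib_right[symmetric] using sum_muminus[OF \<mu>'fin i] by simp
    finally show "avgfit n A \<pi> p \<mu>' b' s' i t = S i * (W * P i)" .
  qed
  have avg_mut: "\<And>i. i < n \<Longrightarrow> avgfit n A \<pi> p \<mu>' b' s' i (mt i) = S i * (W * P i) + muminus n \<mu>' i \<theta>s * D i"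
  proof -
    fix i assume i: "i < n"
    have finTPi: "finite (TPi n \<mu>' i (mt i))" unfolding TPi_def using \<mu>'fin by (intro finite_PiE) auto
    have "avgfit n A \<pi> p \<mu>' b' s' i (mt i)
        = (\<Sum>\<theta>\<in>TPi n \<mu>' i (mt i). muminus n \<mu>' i \<theta> * (W * P i) + (if \<theta> = \<theta>s then muminus n \<mu>' i \<theta> * D i else 0))"
      unfolding avg
    proof (rule sum.cong[OF refl])
      fix \<theta> assume th: "\<theta> \<in> TPi n \<mu>' i (mt i)"
      show "muminus n \<mu>' i \<theta> * Fi i \<theta> = muminus n \<mu>' i \<theta> * (W * P i) + (if \<theta> = \<theta>s then muminus n \<mu>' i \<theta> * D i else 0)"
      proof (cases "\<theta> = \<theta>s")
        case True then show ?thesis using Fi_mut by (simp add: algebra_simps)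
      next
        case False
        then have "\<not> (\<forall>j<n. \<theta> j = mt j)" using \<theta>s_uniq[OF th] by blast
        then show ?thesis using Fi_inc False by simp
      qed
    qed
    also have "\<dots> = (\<Sum>\<theta>\<in>TPi n \<mu>' i (mt i). muminus n \<mu>' i \<theta>) * (W * P i) + muminus n \<mu>' i \<theta>s * D i"
      using finTPi \<theta>s_mem[OF i] by (simp add: sum.distrib sum_distrib_right)
    also have "\<dots> = S i * (W * P i) + muminus n \<mu>' i \<theta>s * D i"
      unfolding S_def using sum_muminus[OF \<mu>'fin i] by simp
    finally show "avgfit n A \<pi> p \<mu>' b' s' i (mt i) = S i * (W * P i) + muminus n \<mu>' i \<theta>s * D i" .
  qed
  have mupos: "\<And>i. i < n \<Longrightarrow> muminus n \<mu>' i \<theta>s > 0"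
    unfolding muminus_def \<theta>s_def by (rule prod_pos) (simp add: mtpos)
  have better: "\<And>i t. i < n \<Longrightarrow> t \<in> dsupp (\<mu> i) \<Longrightarrow>
      avgfit n A \<pi> p \<mu>' b' s' i t < avgfit n A \<pi> p \<mu>' b' s' i (mt i)"
  proof -
    fix i t assume i: "i < n" and t: "t \<in> dsupp (\<mu> i)"
    have "muminus n \<mu>' i \<theta>s * D i > 0" using mupos[OF i] Dpos[OF i] by simp
    then show "avgfit n A \<pi> p \<mu>' b' s' i t < avgfit n A \<pi> p \<mu>' b' s' i (mt i)"
      unfolding avg_inc[OF i t] avg_mut[OF i] by simp
  qed
  from NB NBmem have
    "(\<exists>j\<in>{..<n}. \<forall>t\<in>dsupp (\<mu> j).
        avgfit n A \<pi> p \<mu>' b' s' j t > avgfit n A \<pi> p \<mu>' b' s' j (mt j)) \<or>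
     (\<forall>i<n. \<forall>t\<in>dsupp (\<mu>' i). \<forall>t'\<in>dsupp (\<mu>' i).
        avgfit n A \<pi> p \<mu>' b' s' i t = avgfit n A \<pi> p \<mu>' b' s' i t')"
    by fast
  then show False
  proof
    assume "\<exists>j\<in>{..<n}. \<forall>t\<in>dsupp (\<mu> j).
        avgfit n A \<pi> p \<mu>' b' s' j t > avgfit n A \<pi> p \<mu>' b' s' j (mt j)"
    then obtain j where j: "j < n" and h: "\<forall>t\<in>dsupp (\<mu> j).
        avgfit n A \<pi> p \<mu>' b' s' j t > avgfit n A \<pi> p \<mu>' b' s' j (mt j)" by blast
    have "avgfit n A \<pi> p \<mu>' b' s' j (w0 j) > avgfit n A \<pi> p \<mu>' b' s' j (mt j)" using h w0[OF j] by blast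
    then show False using better[OF j w0[OF j]] by simp
  next
    assume h: "\<forall>i<n. \<forall>t\<in>dsupp (\<mu>' i). \<forall>t'\<in>dsupp (\<mu>' i).
        avgfit n A \<pi> p \<mu>' b' s' i t = avgfit n A \<pi> p \<mu>' b' s' i t'"
    have m0: "mt 0 \<in> dsupp (\<mu>' 0)" using ds'[OF n0] by simp
    have w00: "w0 0 \<in> dsupp (\<mu>' 0)" using ds'[OF n0] w0[OF n0] by simp
    have "avgfit n A \<pi> p \<mu>' b' s' 0 (w0 0) = avgfit n A \<pi> p \<mu>' b' s' 0 (mt 0)"
      using h n0 m0 w00 by blast
    then show False using better[OF n0 w0[OF n0]] by simp
  qed
qed

end
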